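(* Assume the setting below. Let $\nu\in(0,1)$, $s>0$, $\mu>0$, $\beta>0$ satisfy $10\mu\le\min(1-\nu,\nu)\,C_\ell$ and $\beta\ge 3n/s$. Let $\theta^*$ be any minimizer over $\Theta$ of $\theta\mapsto\tilde{\mathsf R}(\theta)+\mu V(\theta)+\frac{\beta}{n}K(\theta)$, let $\hat\theta$ be the $Q$-aggregation weight vector (with these $\nu,\beta,\pi$), and let $$Z_n=(P-P_n)(\tilde\ell_{\hat\theta}-\tilde\ell_{\theta^*})-\mu\sum_{j=1}^M\hat\theta_j\|f_j-f_{\theta^*}\|_2^2-\mu\,\hat\theta^\top\mathbf H\theta^*-\frac1sK(\hat\theta).$$ Then $$R(f_{\hat\theta})\le\min_{1\le j\le M}\Big[R(f_j)+\frac{\beta}{n}\log\frac1{\pi_j}\Big]+2Z_n .$$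
   Context: Setting: $(X,Y)$ random pair in $\mathcal X\times\mathbb R$ with $|Y|\le b$ a.s. ($b>0$); data $\mathcal D=\{(X_i,Y_i)\}_{i=1}^n$ i.i.d. copies of $(X,Y)$; $f_1,\dots,f_M$ deterministic measurable functions with $\max_j|f_j(X)|\le b$ a.s.; $\Theta=\{\theta\in\mathbb R^M:\theta_j\ge0,\ \sum_j\theta_j=1\}$, $f_\theta=\sum_j\theta_jf_j$, $e_j$ canonical basis; $\|f\|_2=\sqrt{\mathbb E f(X)^2}$; prior $\pi$ with $\pi_j>0$, $\sum_j\pi_j=1$. Loss $\ell$ satisfies Assumption 1: for all $f,g\in[-b,b]$, $|\ell(Y,f)-\ell(Y,g)|\le C_b|f-g|$ a.s.; and a.s. $\ell(Y,\cdot)$ is strongly convex on $[-b,b]$ with modulus $C_\ell>0$, i.e. $\ell(Y,\alpha a+(1-\alpha)a')\le\alpha\ell(Y,a)+(1-\alpha)\ell(Y,a')-\frac{C_\ell}2\alpha(1-\alpha)(a-a')^2$. Risks: $R(f)=\mathbb E[\ell(Y,f(X))\mid\mathcal D]$, $R_n(f)=\frac1n\sum_i\ell(Y_i,f(X_i))$. For $g(y,x)$ (possibly data-dependent), $Pg=\mathbb E[g(Y,X)\mid\mathcal D]$ with $(X,Y)$ independent of $\mathcal D$, and $P_ng=\frac1n\sum_ig(Y_i,X_i)$. Notation: $\ell_\theta(y,x)=\ell(y,f_\theta(x))$, $\mathsf R(\theta)=\mathbb E\ell(Y,f_\theta(X))$; $\tilde\ell_\theta=(1-\nu)\ell_\theta+\nu\sum_j\theta_j\ell_{e_j}$,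 $\tilde{\mathsf R}(\theta)=\mathbb E\tilde\ell_\theta(Y,X)$; $K(\theta)=\sum_j\theta_j\log(1/\pi_j)$; $V(\theta)=\sum_j\theta_j\|f_j-f_\theta\|_2^2$; $\mathbf H$ is the $M\times M$ matrix with $\mathbf H_{jk}=\|f_j-f_k\|_2^2$. $Q$-aggregation: $\hat\theta$ is any minimizer over $\Theta$ of $\theta\mapsto(1-\nu)R_n(f_\theta)+\nu\sum_j\theta_jR_n(f_j)-\frac{\beta}{n}\sum_j\theta_j\log\pi_j$. *)

theory Defs
  imports "HOL-Probability.Probability"
begin

text \<open>Experts are indexed by j < M (natural numbers); weight vectors are functions
  nat \<Rightarrow> real of which only the first M coordinates matter.
  The random pair (X,Y) lives on a probability space Mp; X takes values in a
  measurable space S (the set \<X>). The data are a fixed realisation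
  (xs i, ys i), i < n.\<close>

definition wsimplex :: "nat \<Rightarrow> (nat \<Rightarrow> real) set" where
  "wsimplex M = {\<theta>. (\<forall>j<M. 0 \<le> \<theta> j) \<and> (\<Sum>j<M. \<theta> j) = 1}"

definition agg :: "nat \<Rightarrow> (nat \<Rightarrow> 'a \<Rightarrow> real) \<Rightarrow> (nat \<Rightarrow> real) \<Rightarrow> 'a \<Rightarrow> real" where
  "agg M f \<theta> x = (\<Sum>j<M. \<theta> j * f j x)"

definition Pop :: "'w measure \<Rightarrow> ('w \<Rightarrow> 'a) \<Rightarrow> ('w \<Rightarrow> real) \<Rightarrow> (real \<Rightarrow> 'a \<Rightarrow> real) \<Rightarrow> real" where
  "Pop Mp X Y g = (\<integral>\<omega>. g (Y \<omega>) (X \<omega>) \<partial>Mp)"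

definition Emp :: "nat \<Rightarrow> (nat \<Rightarrow> 'a) \<Rightarrow> (nat \<Rightarrow> real) \<Rightarrow> (real \<Rightarrow> 'a \<Rightarrow> real) \<Rightarrow> real" where
  "Emp n xs ys g = (1 / real n) * (\<Sum>i<n. g (ys i) (xs i))"

definition risk :: "'w measure \<Rightarrow> ('w \<Rightarrow> 'a) \<Rightarrow> ('w \<Rightarrow> real) \<Rightarrow> (real \<Rightarrow> real \<Rightarrow> real) \<Rightarrow> ('a \<Rightarrow> real) \<Rightarrow> real" where
  "risk Mp X Y lo g = Pop Mp X Y (\<lambda>y x. lo y (g x))"

definition emp_risk :: "nat \<Rightarrow> (nat \<Rightarrow> 'a) \<Rightarrow> (nat \<Rightarrow> real) \<Rightarrow> (real \<Rightarrow> real \<Rightarrow> real) \<Rightarrow> ('a \<Rightarrow> real) \<Rightarrow> real" where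
  "emp_risk n xs ys lo g = Emp n xs ys (\<lambda>y x. lo y (g x))"

definition sqnorm :: "'w measure \<Rightarrow> ('w \<Rightarrow> 'a) \<Rightarrow> ('a \<Rightarrow> real) \<Rightarrow> real" where
  "sqnorm Mp X g = (\<integral>\<omega>. (g (X \<omega>))\<^sup>2 \<partial>Mp)"

definition tloss :: "nat \<Rightarrow> (nat \<Rightarrow> 'a \<Rightarrow> real) \<Rightarrow> (real \<Rightarrow> real \<Rightarrow> real) \<Rightarrow> real \<Rightarrow> (nat \<Rightarrow> real) \<Rightarrow> real \<Rightarrow> 'a \<Rightarrow> real" where
  "tloss M f lo \<nu> \<theta> y x = (1 - \<nu>) * lo y (agg M f \<theta> x) + \<nu> * (\<Sum>j<M. \<theta> j * lo y (f j x))"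

definition Kdiv :: "nat \<Rightarrow> (nat \<Rightarrow> real) \<Rightarrow> (nat \<Rightarrow> real) \<Rightarrow> real" where
  "Kdiv M \<pi> \<theta> = (\<Sum>j<M. \<theta> j * ln (1 / \<pi> j))"

definition Vvar :: "'w measure \<Rightarrow> ('w \<Rightarrow> 'a) \<Rightarrow> nat \<Rightarrow> (nat \<Rightarrow> 'a \<Rightarrow> real) \<Rightarrow> (nat \<Rightarrow> real) \<Rightarrow> real" where
  "Vvar Mp X M f \<theta> = (\<Sum>j<M. \<theta> j * sqnorm Mp X (\<lambda>x. f j x - agg M f \<theta> x))"

definition Hmat :: "'w measure \<Rightarrow> ('w \<Rightarrow> 'a) \<Rightarrow> (nat \<Rightarrow> 'a \<Rightarrow> real) \<Rightarrow> nat \<Rightarrow> nat \<Rightarrow> real" where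
  "Hmat Mp X f j k = sqnorm Mp X (\<lambda>x. f j x - f k x)"

definition Qcrit :: "nat \<Rightarrow> (nat \<Rightarrow> 'a) \<Rightarrow> (nat \<Rightarrow> real) \<Rightarrow> nat \<Rightarrow> (nat \<Rightarrow> 'a \<Rightarrow> real) \<Rightarrow> (real \<Rightarrow> real \<Rightarrow> real)
    \<Rightarrow> real \<Rightarrow> real \<Rightarrow> (nat \<Rightarrow> real) \<Rightarrow> (nat \<Rightarrow> real) \<Rightarrow> real" where
  "Qcrit n xs ys M f lo \<nu> \<beta> \<pi> \<theta> =
     (1 - \<nu>) * emp_risk n xs ys lo (agg M f \<theta>) + \<nu> * (\<Sum>j<M. \<theta> j * emp_risk n xs ys lo (f j))
     - (\<beta> / real n) * (\<Sum>j<M. \<theta> j * ln (\<pi> j))"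

definition Pcrit :: "'w measure \<Rightarrow> ('w \<Rightarrow> 'a) \<Rightarrow> ('w \<Rightarrow> real) \<Rightarrow> nat \<Rightarrow> nat \<Rightarrow> (nat \<Rightarrow> 'a \<Rightarrow> real)
    \<Rightarrow> (real \<Rightarrow> real \<Rightarrow> real) \<Rightarrow> real \<Rightarrow> real \<Rightarrow> real \<Rightarrow> (nat \<Rightarrow> real) \<Rightarrow> (nat \<Rightarrow> real) \<Rightarrow> real" where
  "Pcrit Mp X Y n M f lo \<nu> \<mu> \<beta> \<pi> \<theta> =
     Pop Mp X Y (tloss M f lo \<nu> \<theta>) + \<mu> * Vvar Mp X M f \<theta> + (\<beta> / real n) * Kdiv M \<pi> \<theta>"

definition Zn :: "'w measure \<Rightarrow> ('w \<Rightarrow> 'a) \<Rightarrow> ('w \<Rightarrow> real) \<Rightarrow> nat \<Rightarrow> (nat \<Rightarrow> 'a) \<Rightarrow> (nat \<Rightarrow> real)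
    \<Rightarrow> nat \<Rightarrow> (nat \<Rightarrow> 'a \<Rightarrow> real) \<Rightarrow> (real \<Rightarrow> real \<Rightarrow> real) \<Rightarrow> real \<Rightarrow> real \<Rightarrow> real \<Rightarrow> (nat \<Rightarrow> real)
    \<Rightarrow> (nat \<Rightarrow> real) \<Rightarrow> (nat \<Rightarrow> real) \<Rightarrow> real" where
  "Zn Mp X Y n xs ys M f lo \<nu> \<mu> s \<pi> \<theta>h \<theta>s =
     (let g = (\<lambda>y x. tloss M f lo \<nu> \<theta>h y x - tloss M f lo \<nu> \<theta>s y x) in
        Pop Mp X Y g - Emp n xs ys g)
     - \<mu> * (\<Sum>j<M. \<theta>h j * sqnorm Mp X (\<lambda>x. f j x - agg M f \<theta>s x))
     - \<mu> * (\<Sum>j<M. \<Sum>k<M. \<theta>h j * Hmat Mp X f j k * \<theta>s k)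
     - (1 / s) * Kdiv M \<pi> \<theta>h"

definition loss_ok :: "(real \<Rightarrow> real \<Rightarrow> real) \<Rightarrow> real \<Rightarrow> real \<Rightarrow> real \<Rightarrow> real \<Rightarrow> bool" where
  "loss_ok lo b Cb Cl y \<longleftrightarrow>
     (\<forall>a\<in>{-b..b}. \<forall>a'\<in>{-b..b}. \<bar>lo y a - lo y a'\<bar> \<le> Cb * \<bar>a - a'\<bar>) \<and>
     (\<forall>a\<in>{-b..b}. \<forall>a'\<in>{-b..b}. \<forall>\<alpha>\<in>{0..1}.
        lo y (\<alpha> * a + (1 - \<alpha>) * a') \<le> \<alpha> * lo y a + (1 - \<alpha>) * lo y a' - Cl / 2 * \<alpha> * (1 - \<alpha>) * (a - a')\<^sup>2)"

end

theory Submission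
  imports Defs
begin


lemma sc_jensen:
  fixes \<phi> :: "real \<Rightarrow> real" and w a :: "nat \<Rightarrow> real"
  assumes sc: "\<forall>a\<in>{-b..b}. \<forall>a'\<in>{-b..b}. \<forall>\<alpha>\<in>{0..1}.
        \<phi> (\<alpha> * a + (1 - \<alpha>) * a') \<le> \<alpha> * \<phi> a + (1 - \<alpha>) * \<phi> a' - C / 2 * \<alpha> * (1 - \<alpha>) * (a - a')\<^sup>2"
    and fin: "finite I" "I \<noteq> {}" and w1: "(\<Sum>i\<in>I. w i) = 1" and w0: "\<And>i. i \<in> I \<Longrightarrow> w i \<ge> 0"
    and ab: "\<And>i. i \<in> I \<Longrightarrow> a i \<in> {-b..b}"
  shows "\<phi> (\<Sum>i\<in>I. w i * a i) \<le> (\<Sum>i\<in>I. w i * \<phi> (a i)) - C / 2 * (\<Sum>i\<in>I. w i * (a i - (\<Sum>k\<in>I. w k * a k))\<^sup>2)"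
proof -
  define \<psi> where "\<psi> t = \<phi> t - C / 2 * t\<^sup>2" for t
  have cvx: "convex_on {-b..b} \<psi>"
  proof (rule convex_onI)
    fix t x y :: real assume t: "t > 0" "t < 1" and xy: "x \<in> {-b..b}" "y \<in> {-b..b}"
    have f1: "\<phi> ((1 - t) * x + (1 - (1 - t)) * y) \<le> (1 - t) * \<phi> x + (1 - (1 - t)) * \<phi> y - C / 2 * (1 - t) * (1 - (1 - t)) * (x - y)\<^sup>2"
      using sc xy t by (intro sc[rule_format]) auto
    then have f1: "\<phi> ((1 - t) * x + t * y) \<le> (1 - t) * \<phi> x + t * \<phi> y - C / 2 * (1 - t) * t * (x - y)\<^sup>2"
      by simp
    have e: "C / 2 * ((1 - t) * x + t * y)\<^sup>2 = (1 - t) * (C / 2 * x\<^sup>2) + t * (C / 2 * y\<^sup>2) - C / 2 * (1 - t) * t * (x - y)\<^sup>2"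
      by (simp add: power2_eq_square field_simps)
    have e2: "(1 - t) * (\<phi> x - C / 2 * x\<^sup>2) + t * (\<phi> y - C / 2 * y\<^sup>2) = ((1 - t) * \<phi> x + t * \<phi> y) - ((1 - t) * (C / 2 * x\<^sup>2) + t * (C / 2 * y\<^sup>2))"
      by (simp add: algebra_simps)
    have "\<phi> ((1 - t) * x + t * y) - C / 2 * ((1 - t) * x + t * y)\<^sup>2 \<le> (1 - t) * (\<phi> x - C / 2 * x\<^sup>2) + t * (\<phi> y - C / 2 * y\<^sup>2)"
      using f1 e e2 by linarith
    then show "\<psi> ((1 - t) *\<^sub>R x + t *\<^sub>R y) \<le> (1 - t) * \<psi> x + t * \<psi> y"
      unfolding \<psi>_def by simp
  qed simp
  have "\<psi> (\<Sum>i\<in>I. w i *\<^sub>R a i) \<le> (\<Sum>i\<in>I. w i * \<psi> (a i))"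
    by (rule convex_on_sum[OF fin cvx w1 w0 ab])
  then have j: "\<psi> (\<Sum>i\<in>I. w i * a i) \<le> (\<Sum>i\<in>I. w i * \<psi> (a i))" by simp
  define m where "m = (\<Sum>k\<in>I. w k * a k)"
  have var: "(\<Sum>i\<in>I. w i * (a i - m)\<^sup>2) = (\<Sum>i\<in>I. w i * (a i)\<^sup>2) - m\<^sup>2"
  proof -
    have "(\<Sum>i\<in>I. w i * (a i - m)\<^sup>2) = (\<Sum>i\<in>I. w i * (a i)\<^sup>2) - 2 * m * (\<Sum>i\<in>I. w i * a i) + m\<^sup>2 * (\<Sum>i\<in>I. w i)"
      by (simp add: power2_eq_square algebra_simps sum.distrib sum_subtractf sum_distrib_left sum_distrib_right)
    then show ?thesis using w1 by (simp add: m_def power2_eq_square)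
  qed
  have "(\<Sum>i\<in>I. w i * \<psi> (a i)) = (\<Sum>i\<in>I. w i * \<phi> (a i)) - C/2 * (\<Sum>i\<in>I. w i * (a i)\<^sup>2)"
    unfolding \<psi>_def by (simp add: algebra_simps sum_subtractf sum_distrib_left)
  with j var have "\<phi> m - C / 2 * m\<^sup>2 \<le> (\<Sum>i\<in>I. w i * \<phi> (a i)) - C/2 * ((\<Sum>i\<in>I. w i * (a i - m)\<^sup>2) + m\<^sup>2)"
    unfolding \<psi>_def m_def[symmetric] by simp
  then show ?thesis unfolding m_def[symmetric] by (simp add: algebra_simps)
qed

lemma var_id:
  fixes w a :: "nat \<Rightarrow> real"
  assumes "(\<Sum>j<M. w j) = 1"
  shows "(\<Sum>j<M. w j * (a j - c)\<^sup>2) = (\<Sum>j<M. w j * (a j)\<^sup>2) - 2 * c * (\<Sum>j<M. w j * a j) + c\<^sup>2"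
proof -
  have "(\<Sum>j<M. w j * (a j - c)\<^sup>2) = (\<Sum>j<M. w j * (a j)\<^sup>2) - 2 * c * (\<Sum>j<M. w j * a j) + c\<^sup>2 * (\<Sum>j<M. w j)"
    by (simp add: power2_eq_square algebra_simps sum.distrib sum_subtractf sum_distrib_left sum_distrib_right)
  then show ?thesis using assms by simp
qed

lemma agg_bd:
  assumes "\<theta> \<in> wsimplex M" "\<forall>j<M. \<bar>f j x\<bar> \<le> b"
  shows "\<bar>agg M f \<theta> x\<bar> \<le> b"
proof -
  have "\<bar>agg M f \<theta> x\<bar> \<le> (\<Sum>j<M. \<bar>\<theta> j * f j x\<bar>)" unfolding agg_def by (rule sum_abs)
  also have "\<dots> \<le> (\<Sum>j<M. \<theta> j * b)"
    using assms by (intro sum_mono) (auto simp: wsimplex_def abs_mult intro: mult_left_mono)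
  also have "\<dots> = b" using assms by (simp add: wsimplex_def sum_distrib_right[symmetric])
  finally show ?thesis .
qed

lemma agg_comb: "agg M f (\<lambda>k. \<alpha> * \<theta> k + (1 - \<alpha>) * \<theta>' k) x = \<alpha> * agg M f \<theta> x + (1 - \<alpha>) * agg M f \<theta>' x"
proof -
  have "agg M f (\<lambda>k. \<alpha> * \<theta> k + (1 - \<alpha>) * \<theta>' k) x = (\<Sum>j<M. \<alpha> * (\<theta> j * f j x) + (1 - \<alpha>) * (\<theta>' j * f j x))"
    unfolding agg_def by (intro sum.cong) (auto simp: algebra_simps)
  also have "\<dots> = \<alpha> * agg M f \<theta> x + (1 - \<alpha>) * agg M f \<theta>' x"
    unfolding agg_def by (simp add: sum.distrib sum_distrib_left)
  finally show ?thesis .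
qed

lemma wsimplex_comb:
  assumes "\<theta> \<in> wsimplex M" "\<theta>' \<in> wsimplex M" "0 \<le> \<alpha>" "\<alpha> \<le> 1"
  shows "(\<lambda>k. \<alpha> * \<theta> k + (1 - \<alpha>) * \<theta>' k) \<in> wsimplex M"
  using assms by (auto simp: wsimplex_def sum.distrib sum_distrib_left[symmetric])

lemma e_simplex: "j < M \<Longrightarrow> (\<lambda>k. if k = j then (1::real) else 0) \<in> wsimplex M"
  by (auto simp: wsimplex_def)

lemma agg_e: "j < M \<Longrightarrow> agg M f (\<lambda>k. if k = j then (1::real) else 0) = f j"
proof -
  assume "j < M"
  have "agg M f (\<lambda>k. if k = j then (1::real) else 0) x = (\<Sum>k<M. if k = j then f k x else 0)" for x
    unfolding agg_def by (intro sum.cong) auto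
  then show ?thesis using \<open>j < M\<close> by (auto simp: fun_eq_iff)
qed

lemma lim_arg:
  fixes c D \<Delta> :: real
  assumes h: "\<And>\<alpha>. 0 < \<alpha> \<Longrightarrow> \<alpha> \<le> 1 \<Longrightarrow> c * (1 - \<alpha>) * D \<le> \<Delta>" and c: "c \<ge> 0" and D: "D \<ge> 0"
  shows "c * D \<le> \<Delta>"
proof (rule ccontr)
  assume a: "\<not> c * D \<le> \<Delta>"
  have "0 \<le> \<Delta>" using h[of 1] by simp
  with a have cd: "c * D > 0" by linarith
  define \<alpha> where "\<alpha> = (c * D - \<Delta>) / (2 * (c * D))"
  have a0: "0 < \<alpha>" using a cd by (simp add: \<alpha>_def)
  have a1: "\<alpha> \<le> 1" using \<open>0 \<le> \<Delta>\<close> cd by (simp add: \<alpha>_def field_simps)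
  have "c * (1 - \<alpha>) * D = c * D - \<alpha> * (c * D)" by (simp add: algebra_simps)
  also have "\<alpha> * (c * D) = (c * D - \<Delta>) / 2"
  proof -
    have "\<And>p q :: real. p \<noteq> 0 \<Longrightarrow> (p - q) / (2 * p) * p = (p - q) / 2" by (simp add: field_simps)
    then show ?thesis using cd unfolding \<alpha>_def by force
  qed
  finally have "c * (1 - \<alpha>) * D = (c * D + \<Delta>) / 2" by argo
  with h[OF a0 a1] a show False by argo
qed


theorem proposition4:
  fixes Mp :: "'w measure" and S :: "'a measure" and X :: "'w \<Rightarrow> 'a" and Y :: "'w \<Rightarrow> real"
    and lo :: "real \<Rightarrow> real \<Rightarrow> real" and f :: "nat \<Rightarrow> 'a \<Rightarrow> real" and M n :: nat
    and xs :: "nat \<Rightarrow> 'a" and ys :: "nat \<Rightarrow> real"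
    and \<pi> \<theta>h \<theta>s :: "nat \<Rightarrow> real" and b Cb Cl \<nu> s \<mu> \<beta> :: real
  assumes prob: "prob_space Mp"
    and X_meas: "X \<in> measurable Mp S" and Y_meas: "Y \<in> borel_measurable Mp"
    and f_meas: "\<And>j. j < M \<Longrightarrow> f j \<in> borel_measurable S"
    and M_pos: "M \<ge> 1" and n_pos: "n \<ge> 1"
    and b_pos: "b > 0" and Cl_pos: "Cl > 0"
    and Y_bd: "AE \<omega> in Mp. \<bar>Y \<omega>\<bar> \<le> b"
    and f_bd: "AE \<omega> in Mp. \<forall>j<M. \<bar>f j (X \<omega>)\<bar> \<le> b"
    and loss_asm: "AE \<omega> in Mp. loss_ok lo b Cb Cl (Y \<omega>)"
    and risk_int: "\<And>\<theta>. \<theta> \<in> wsimplex M \<Longrightarrow> integrable Mp (\<lambda>\<omega>. lo (Y \<omega>) (agg M f \<theta> (X \<omega>)))"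
    and data_X: "\<And>i. i < n \<Longrightarrow> xs i \<in> space S"
    and data_Y_bd: "\<And>i. i < n \<Longrightarrow> \<bar>ys i\<bar> \<le> b"
    and data_f_bd: "\<And>i j. i < n \<Longrightarrow> j < M \<Longrightarrow> \<bar>f j (xs i)\<bar> \<le> b"
    and data_loss: "\<And>i. i < n \<Longrightarrow> loss_ok lo b Cb Cl (ys i)"
    and prior_pos: "\<And>j. j < M \<Longrightarrow> \<pi> j > 0" and prior_sum: "(\<Sum>j<M. \<pi> j) = 1"
    and nu: "0 < \<nu>" "\<nu> < 1" and s_pos: "s > 0" and mu_pos: "\<mu> > 0" and beta_pos: "\<beta> > 0"
    and mu_le: "10 * \<mu> \<le> min (1 - \<nu>) \<nu> * Cl"
    and beta_ge: "\<beta> \<ge> 3 * real n / s"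
    and thetas_min: "\<theta>s \<in> wsimplex M"
      "\<And>\<theta>. \<theta> \<in> wsimplex M \<Longrightarrow> Pcrit Mp X Y n M f lo \<nu> \<mu> \<beta> \<pi> \<theta>s \<le> Pcrit Mp X Y n M f lo \<nu> \<mu> \<beta> \<pi> \<theta>"
    and thetah_min: "\<theta>h \<in> wsimplex M"
      "\<And>\<theta>. \<theta> \<in> wsimplex M \<Longrightarrow> Qcrit n xs ys M f lo \<nu> \<beta> \<pi> \<theta>h \<le> Qcrit n xs ys M f lo \<nu> \<beta> \<pi> \<theta>"
  shows "risk Mp X Y lo (agg M f \<theta>h)
     \<le> Min ((\<lambda>j. risk Mp X Y lo (f j) + (\<beta> / real n) * ln (1 / \<pi> j)) ` {..<M})
        + 2 * Zn Mp X Y n xs ys M f lo \<nu> \<mu> s \<pi> \<theta>h \<theta>s"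
proof -
  interpret P: prob_space Mp by (rule prob)
  define e :: "nat \<Rightarrow> nat \<Rightarrow> real" where "e j = (\<lambda>k. if k = j then (1::real) else 0)" for j
  define rk :: "(nat \<Rightarrow> real) \<Rightarrow> real" where "rk \<theta> = risk Mp X Y lo (agg M f \<theta>)" for \<theta>
  define rj :: "nat \<Rightarrow> real" where "rj j = risk Mp X Y lo (f j)" for j
  define D :: "(nat \<Rightarrow> real) \<Rightarrow> (nat \<Rightarrow> real) \<Rightarrow> real" where "D \<theta> \<theta>' = (\<integral>\<omega>. (agg M f \<theta> (X \<omega>) - agg M f \<theta>' (X \<omega>))\<^sup>2 \<partial>Mp)" for \<theta> \<theta>'
  define v :: "(nat \<Rightarrow> real) \<Rightarrow> 'a \<Rightarrow> real" where "v \<theta> x = (\<Sum>j<M. \<theta> j * (f j x - agg M f \<theta> x)\<^sup>2)" for \<theta> x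
  define V :: "(nat \<Rightarrow> real) \<Rightarrow> real" where "V \<theta> = Vvar Mp X M f \<theta>" for \<theta>
  define G :: "(nat \<Rightarrow> real) \<Rightarrow> real" where "G \<theta> = Pcrit Mp X Y n M f lo \<nu> \<mu> \<beta> \<pi> \<theta>" for \<theta>
  have fm: "(\<lambda>\<omega>. f j (X \<omega>)) \<in> borel_measurable Mp" if "j < M" for j
    using measurable_comp[OF X_meas f_meas[OF that]] by (simp add: comp_def)
  have aggm: "(\<lambda>\<omega>. agg M f \<theta> (X \<omega>)) \<in> borel_measurable Mp" for \<theta>
    unfolding agg_def using fm by (intro borel_measurable_sum borel_measurable_times) auto
  have sqI: "integrable Mp (\<lambda>\<omega>. (u \<omega>)\<^sup>2)" if "u \<in> borel_measurable Mp" "AE \<omega> in Mp. \<bar>u \<omega>\<bar> \<le> B" for u :: "'w \<Rightarrow> real" and B :: real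
  proof (rule P.integrable_const_bound[where B="B\<^sup>2"])
    show "AE \<omega> in Mp. norm ((u \<omega>)\<^sup>2) \<le> B\<^sup>2" using that(2)
    proof eventually_elim
      case (elim \<omega>) then show ?case by (simp add: abs_le_square_iff[symmetric])
    qed
  qed (use that in simp)
  have abs2: "\<bar>x - y\<bar> \<le> 2 * b" if "\<bar>x\<bar> \<le> b" "\<bar>y\<bar> \<le> b" for x y :: real using that by linarith
  have e_s: "e j \<in> wsimplex M" if "j < M" for j using e_simplex[OF that] by (simp add: e_def)
  have agg_ej: "agg M f (e j) = f j" if "j < M" for j using agg_e[OF that] by (simp add: e_def)
  have Lint: "integrable Mp (\<lambda>\<omega>. lo (Y \<omega>) (agg M f \<theta> (X \<omega>)))" if "\<theta> \<in> wsimplex M" for \<theta>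
    using risk_int[OF that] .
  have Ljint: "integrable Mp (\<lambda>\<omega>. lo (Y \<omega>) (f j (X \<omega>)))" if "j < M" for j
    using risk_int[OF e_s[OF that]] by (simp add: agg_ej[OF that])
  have AEb: "AE \<omega> in Mp. (\<forall>j<M. \<bar>f j (X \<omega>)\<bar> \<le> b) \<and> (\<forall>\<theta>\<in>wsimplex M. \<bar>agg M f \<theta> (X \<omega>)\<bar> \<le> b)"
    using f_bd by eventually_elim (auto intro: agg_bd)
  have sq1: "integrable Mp (\<lambda>\<omega>. (f j (X \<omega>) - agg M f \<theta> (X \<omega>))\<^sup>2)" if "j < M" "\<theta> \<in> wsimplex M" for j \<theta>
  proof (rule sqI[of _ "2*b"])
    show "AE \<omega> in Mp. \<bar>f j (X \<omega>) - agg M f \<theta> (X \<omega>)\<bar> \<le> 2 * b" using AEb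
      by eventually_elim (use that in \<open>meson abs2\<close>)
  qed (use fm[OF that(1)] aggm in simp)
  have sq2: "integrable Mp (\<lambda>\<omega>. (agg M f \<theta> (X \<omega>) - agg M f \<theta>' (X \<omega>))\<^sup>2)" if "\<theta> \<in> wsimplex M" "\<theta>' \<in> wsimplex M" for \<theta> \<theta>'
  proof (rule sqI[of _ "2*b"])
    show "AE \<omega> in Mp. \<bar>agg M f \<theta> (X \<omega>) - agg M f \<theta>' (X \<omega>)\<bar> \<le> 2 * b" using AEb
      by eventually_elim (use that in \<open>meson abs2\<close>)
  qed (use aggm in simp)
  have sq3: "integrable Mp (\<lambda>\<omega>. (f j (X \<omega>) - f k (X \<omega>))\<^sup>2)" if "j < M" "k < M" for j k
  proof (rule sqI[of _ "2*b"])
    show "AE \<omega> in Mp. \<bar>f j (X \<omega>) - f k (X \<omega>)\<bar> \<le> 2 * b" using AEb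
      by eventually_elim (use that in \<open>meson abs2\<close>)
  qed (use fm that in simp)
  have vint: "integrable Mp (\<lambda>\<omega>. v \<theta> (X \<omega>))" if "\<theta> \<in> wsimplex M" for \<theta>
    unfolding v_def by (intro Bochner_Integration.integrable_sum integrable_mult_right) (auto intro: sq1 that)
  have PT: "Pop Mp X Y (tloss M f lo \<nu> \<theta>) = (1 - \<nu>) * rk \<theta> + \<nu> * (\<Sum>j<M. \<theta> j * rj j)" if th: "\<theta> \<in> wsimplex M" for \<theta>
  proof -
    have "Pop Mp X Y (tloss M f lo \<nu> \<theta>) = (\<integral>\<omega>. (1 - \<nu>) * lo (Y \<omega>) (agg M f \<theta> (X \<omega>)) + \<nu> * (\<Sum>j<M. \<theta> j * lo (Y \<omega>) (f j (X \<omega>))) \<partial>Mp)"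
      by (simp add: Pop_def tloss_def)
    also have "\<dots> = (\<integral>\<omega>. (1 - \<nu>) * lo (Y \<omega>) (agg M f \<theta> (X \<omega>)) \<partial>Mp) + (\<integral>\<omega>. \<nu> * (\<Sum>j<M. \<theta> j * lo (Y \<omega>) (f j (X \<omega>))) \<partial>Mp)"
      by (intro Bochner_Integration.integral_add integrable_mult_right Bochner_Integration.integrable_sum) (auto intro: Lint[OF th] Ljint)
    also have "\<dots> = (1 - \<nu>) * rk \<theta> + \<nu> * (\<Sum>j<M. \<theta> j * rj j)"
      using Ljint by (simp add: rk_def rj_def risk_def Pop_def Bochner_Integration.integral_sum)
    finally show ?thesis .
  qed
  have VI: "V \<theta> = (\<integral>\<omega>. v \<theta> (X \<omega>) \<partial>Mp)" if th: "\<theta> \<in> wsimplex M" for \<theta>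
    unfolding V_def Vvar_def v_def sqnorm_def using sq1 th
    by (subst Bochner_Integration.integral_sum) (auto intro!: integrable_mult_right)
  have Vnn: "V \<theta> \<ge> 0" if th: "\<theta> \<in> wsimplex M" for \<theta>
    unfolding VI[OF th] v_def using th
    by (intro integral_nonneg_AE AE_I2 sum_nonneg mult_nonneg_nonneg) (auto simp: wsimplex_def)
  have Dnn: "D \<theta> \<theta>' \<ge> 0" for \<theta> \<theta>'
    unfolding D_def by (intro integral_nonneg_AE AE_I2) auto
  have jens: "rk \<theta> \<le> (\<Sum>j<M. \<theta> j * rj j) - Cl / 2 * V \<theta>" if th: "\<theta> \<in> wsimplex M" for \<theta>
  proof -
    have "rk \<theta> \<le> (\<integral>\<omega>. (\<Sum>j<M. \<theta> j * lo (Y \<omega>) (f j (X \<omega>))) - Cl / 2 * v \<theta> (X \<omega>) \<partial>Mp)"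
      unfolding rk_def risk_def Pop_def
    proof (rule integral_mono_AE)
      show "integrable Mp (\<lambda>\<omega>. (\<Sum>j<M. \<theta> j * lo (Y \<omega>) (f j (X \<omega>))) - Cl / 2 * v \<theta> (X \<omega>))"
        by (intro Bochner_Integration.integrable_diff Bochner_Integration.integrable_sum integrable_mult_right) (auto intro: Ljint vint[OF th])
      show "AE \<omega> in Mp. lo (Y \<omega>) (agg M f \<theta> (X \<omega>)) \<le> (\<Sum>j<M. \<theta> j * lo (Y \<omega>) (f j (X \<omega>))) - Cl / 2 * v \<theta> (X \<omega>)"
        using AEb loss_asm
      proof eventually_elim
        case (elim \<omega>)
        have "lo (Y \<omega>) (\<Sum>j\<in>{..<M}. \<theta> j * f j (X \<omega>)) \<le> (\<Sum>j\<in>{..<M}. \<theta> j * lo (Y \<omega>) (f j (X \<omega>))) - Cl / 2 * (\<Sum>j\<in>{..<M}. \<theta> j * (f j (X \<omega>) - (\<Sum>k\<in>{..<M}. \<theta> k * f k (X \<omega>)))\<^sup>2)"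
          using elim th M_pos by (intro sc_jensen[where b=b]) (auto simp: loss_ok_def wsimplex_def abs_le_iff)
        then show ?case by (simp add: v_def agg_def)
      qed
    qed (use Lint[OF th] in simp)
    also have "\<dots> = (\<integral>\<omega>. (\<Sum>j<M. \<theta> j * lo (Y \<omega>) (f j (X \<omega>))) \<partial>Mp) - (\<integral>\<omega>. Cl / 2 * v \<theta> (X \<omega>) \<partial>Mp)"
      by (intro Bochner_Integration.integral_diff Bochner_Integration.integrable_sum integrable_mult_right) (auto intro: Ljint vint[OF th])
    also have "\<dots> = (\<Sum>j<M. \<theta> j * rj j) - Cl / 2 * V \<theta>"
      by (subst Bochner_Integration.integral_sum) (auto intro: Ljint simp: VI[OF th] rj_def risk_def Pop_def)
    finally show ?thesis .
  qed
  have vx: "v \<theta> x = (\<Sum>j<M. \<theta> j * (f j x)\<^sup>2) - (agg M f \<theta> x)\<^sup>2" if "\<theta> \<in> wsimplex M" for \<theta> x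
  proof -
    have "v \<theta> x = (\<Sum>j<M. \<theta> j * (f j x)\<^sup>2) - 2 * agg M f \<theta> x * (\<Sum>j<M. \<theta> j * f j x) + (agg M f \<theta> x)\<^sup>2"
      unfolding v_def by (rule var_id) (use that in \<open>simp add: wsimplex_def\<close>)
    then show ?thesis by (simp add: agg_def power2_eq_square)
  qed
  have Gform: "G \<theta> = (1 - \<nu>) * rk \<theta> + \<nu> * (\<Sum>j<M. \<theta> j * rj j) + \<mu> * V \<theta> + \<beta> / real n * Kdiv M \<pi> \<theta>"
    if "\<theta> \<in> wsimplex M" for \<theta>
    unfolding G_def Pcrit_def PT[OF that] V_def by simp
  have segs: "(\<Sum>j<M. (\<alpha> * \<theta> j + (1 - \<alpha>) * \<theta>' j) * r j) = \<alpha> * (\<Sum>j<M. \<theta> j * r j) + (1 - \<alpha>) * (\<Sum>j<M. \<theta>' j * r j)"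
    for \<alpha> :: real and \<theta> \<theta>' r :: "nat \<Rightarrow> real"
  proof -
    have "(\<Sum>j<M. (\<alpha> * \<theta> j + (1 - \<alpha>) * \<theta>' j) * r j) = (\<Sum>j<M. \<alpha> * (\<theta> j * r j) + (1 - \<alpha>) * (\<theta>' j * r j))"
      by (intro sum.cong) (auto simp: algebra_simps)
    also have "\<dots> = \<alpha> * (\<Sum>j<M. \<theta> j * r j) + (1 - \<alpha>) * (\<Sum>j<M. \<theta>' j * r j)"
      by (simp add: sum.distrib sum_distrib_left)
    finally show ?thesis .
  qed
  have segK: "Kdiv M \<pi> (\<lambda>k. \<alpha> * \<theta> k + (1 - \<alpha>) * \<theta>' k) = \<alpha> * Kdiv M \<pi> \<theta> + (1 - \<alpha>) * Kdiv M \<pi> \<theta>'" for \<alpha> \<theta> \<theta>'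
    unfolding Kdiv_def by (rule segs)
  have seg_rk: "rk (\<lambda>k. \<alpha> * \<theta> k + (1 - \<alpha>) * \<theta>' k) \<le> \<alpha> * rk \<theta> + (1 - \<alpha>) * rk \<theta>' - Cl / 2 * (\<alpha> * (1 - \<alpha>) * D \<theta> \<theta>')"
    if th: "\<theta> \<in> wsimplex M" "\<theta>' \<in> wsimplex M" and al: "0 \<le> \<alpha>" "\<alpha> \<le> 1" for \<theta> \<theta>' \<alpha>
  proof -
    have "rk (\<lambda>k. \<alpha> * \<theta> k + (1 - \<alpha>) * \<theta>' k) \<le> (\<integral>\<omega>. (\<alpha> * lo (Y \<omega>) (agg M f \<theta> (X \<omega>)) + (1 - \<alpha>) * lo (Y \<omega>) (agg M f \<theta>' (X \<omega>))) - Cl / 2 * (\<alpha> * (1 - \<alpha>)) * (agg M f \<theta> (X \<omega>) - agg M f \<theta>' (X \<omega>))\<^sup>2 \<partial>Mp)"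
      unfolding rk_def risk_def Pop_def
    proof (rule integral_mono_AE)
      show "integrable Mp (\<lambda>\<omega>. (\<alpha> * lo (Y \<omega>) (agg M f \<theta> (X \<omega>)) + (1 - \<alpha>) * lo (Y \<omega>) (agg M f \<theta>' (X \<omega>))) - Cl / 2 * (\<alpha> * (1 - \<alpha>)) * (agg M f \<theta> (X \<omega>) - agg M f \<theta>' (X \<omega>))\<^sup>2)"
        by (intro Bochner_Integration.integrable_diff Bochner_Integration.integrable_add integrable_mult_right) (auto intro: Lint th sq2)
      show "integrable Mp (\<lambda>\<omega>. lo (Y \<omega>) (agg M f (\<lambda>k. \<alpha> * \<theta> k + (1 - \<alpha>) * \<theta>' k) (X \<omega>)))"
        by (rule Lint[OF wsimplex_comb[OF th al]])
      show "AE \<omega> in Mp. lo (Y \<omega>) (agg M f (\<lambda>k. \<alpha> * \<theta> k + (1 - \<alpha>) * \<theta>' k) (X \<omega>)) \<le> (\<alpha> * lo (Y \<omega>) (agg M f \<theta> (X \<omega>)) + (1 - \<alpha>) * lo (Y \<omega>) (agg M f \<theta>' (X \<omega>))) - Cl / 2 * (\<alpha> * (1 - \<alpha>)) * (agg M f \<theta> (X \<omega>) - agg M f \<theta>' (X \<omega>))\<^sup>2"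
        using AEb loss_asm
      proof eventually_elim
        case (elim \<omega>)
        then have b1: "agg M f \<theta> (X \<omega>) \<in> {-b..b}" "agg M f \<theta>' (X \<omega>) \<in> {-b..b}" using th by (auto simp: abs_le_iff)
        have "lo (Y \<omega>) (\<alpha> * agg M f \<theta> (X \<omega>) + (1 - \<alpha>) * agg M f \<theta>' (X \<omega>)) \<le> \<alpha> * lo (Y \<omega>) (agg M f \<theta> (X \<omega>)) + (1 - \<alpha>) * lo (Y \<omega>) (agg M f \<theta>' (X \<omega>)) - Cl / 2 * \<alpha> * (1 - \<alpha>) * (agg M f \<theta> (X \<omega>) - agg M f \<theta>' (X \<omega>))\<^sup>2"
        proof -
          have "\<forall>\<alpha>'\<in>{0..1}. lo (Y \<omega>) (\<alpha>' * agg M f \<theta> (X \<omega>) + (1 - \<alpha>') * agg M f \<theta>' (X \<omega>)) \<le> \<alpha>' * lo (Y \<omega>) (agg M f \<theta> (X \<omega>)) + (1 - \<alpha>') * lo (Y \<omega>) (agg M f \<theta>' (X \<omega>)) - Cl / 2 * \<alpha>' * (1 - \<alpha>') * (agg M f \<theta> (X \<omega>) - agg M f \<theta>' (X \<omega>))\<^sup>2"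
            using elim(2) b1 unfolding loss_ok_def by blast
          then show ?thesis using al by simp
        qed
        then show ?case by (simp add: agg_comb mult.assoc)
      qed
    qed
    also have "\<dots> = (\<alpha> * rk \<theta> + (1 - \<alpha>) * rk \<theta>') - Cl / 2 * (\<alpha> * (1 - \<alpha>)) * D \<theta> \<theta>'"
    proof -
      have i1: "integrable Mp (\<lambda>\<omega>. \<alpha> * lo (Y \<omega>) (agg M f \<theta> (X \<omega>)))" "integrable Mp (\<lambda>\<omega>. (1 - \<alpha>) * lo (Y \<omega>) (agg M f \<theta>' (X \<omega>)))"
        "integrable Mp (\<lambda>\<omega>. Cl / 2 * (\<alpha> * (1 - \<alpha>)) * (agg M f \<theta> (X \<omega>) - agg M f \<theta>' (X \<omega>))\<^sup>2)"
        by (intro integrable_mult_right; auto intro: Lint th sq2)+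
      have "(\<integral>\<omega>. (\<alpha> * lo (Y \<omega>) (agg M f \<theta> (X \<omega>)) + (1 - \<alpha>) * lo (Y \<omega>) (agg M f \<theta>' (X \<omega>))) - Cl / 2 * (\<alpha> * (1 - \<alpha>)) * (agg M f \<theta> (X \<omega>) - agg M f \<theta>' (X \<omega>))\<^sup>2 \<partial>Mp)
        = (\<integral>\<omega>. \<alpha> * lo (Y \<omega>) (agg M f \<theta> (X \<omega>)) + (1 - \<alpha>) * lo (Y \<omega>) (agg M f \<theta>' (X \<omega>)) \<partial>Mp) - (\<integral>\<omega>. Cl / 2 * (\<alpha> * (1 - \<alpha>)) * (agg M f \<theta> (X \<omega>) - agg M f \<theta>' (X \<omega>))\<^sup>2 \<partial>Mp)"
        by (rule Bochner_Integration.integral_diff) (use i1 in auto)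
      also have "(\<integral>\<omega>. \<alpha> * lo (Y \<omega>) (agg M f \<theta> (X \<omega>)) + (1 - \<alpha>) * lo (Y \<omega>) (agg M f \<theta>' (X \<omega>)) \<partial>Mp)
         = (\<integral>\<omega>. \<alpha> * lo (Y \<omega>) (agg M f \<theta> (X \<omega>)) \<partial>Mp) + (\<integral>\<omega>. (1 - \<alpha>) * lo (Y \<omega>) (agg M f \<theta>' (X \<omega>)) \<partial>Mp)"
        by (rule Bochner_Integration.integral_add) (use i1 in auto)
      finally show ?thesis by (simp add: rk_def risk_def Pop_def D_def)
    qed
    finally show ?thesis by (simp add: mult.assoc)
  qed
  have seg_V: "V (\<lambda>k. \<alpha> * \<theta> k + (1 - \<alpha>) * \<theta>' k) = \<alpha> * V \<theta> + (1 - \<alpha>) * V \<theta>' + \<alpha> * (1 - \<alpha>) * D \<theta> \<theta>'"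
    if th: "\<theta> \<in> wsimplex M" "\<theta>' \<in> wsimplex M" and al: "0 \<le> \<alpha>" "\<alpha> \<le> 1" for \<theta> \<theta>' \<alpha>
  proof -
    let ?ta = "\<lambda>k. \<alpha> * \<theta> k + (1 - \<alpha>) * \<theta>' k"
    have ta: "?ta \<in> wsimplex M" by (rule wsimplex_comb[OF th al])
    have pw: "v ?ta x = \<alpha> * v \<theta> x + (1 - \<alpha>) * v \<theta>' x + \<alpha> * (1 - \<alpha>) * (agg M f \<theta> x - agg M f \<theta>' x)\<^sup>2" for x
    proof -
      have "v ?ta x = (\<alpha> * (\<Sum>j<M. \<theta> j * (f j x)\<^sup>2) + (1 - \<alpha>) * (\<Sum>j<M. \<theta>' j * (f j x)\<^sup>2)) - (\<alpha> * agg M f \<theta> x + (1 - \<alpha>) * agg M f \<theta>' x)\<^sup>2"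
        unfolding vx[OF ta] segs agg_comb ..
      also have "\<dots> = \<alpha> * ((\<Sum>j<M. \<theta> j * (f j x)\<^sup>2) - (agg M f \<theta> x)\<^sup>2) + (1 - \<alpha>) * ((\<Sum>j<M. \<theta>' j * (f j x)\<^sup>2) - (agg M f \<theta>' x)\<^sup>2) + \<alpha> * (1 - \<alpha>) * (agg M f \<theta> x - agg M f \<theta>' x)\<^sup>2"
        by (simp add: power2_eq_square algebra_simps)
      finally show ?thesis unfolding vx[OF th(1)] vx[OF th(2)] .
    qed
    have i1: "integrable Mp (\<lambda>\<omega>. \<alpha> * v \<theta> (X \<omega>))" "integrable Mp (\<lambda>\<omega>. (1 - \<alpha>) * v \<theta>' (X \<omega>))"
        "integrable Mp (\<lambda>\<omega>. \<alpha> * (1 - \<alpha>) * (agg M f \<theta> (X \<omega>) - agg M f \<theta>' (X \<omega>))\<^sup>2)"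
      by (intro integrable_mult_right; auto intro: vint th sq2)+
    have "V ?ta = (\<integral>\<omega>. \<alpha> * v \<theta> (X \<omega>) + (1 - \<alpha>) * v \<theta>' (X \<omega>) + \<alpha> * (1 - \<alpha>) * (agg M f \<theta> (X \<omega>) - agg M f \<theta>' (X \<omega>))\<^sup>2 \<partial>Mp)"
      unfolding VI[OF ta] pw ..
    also have "\<dots> = (\<integral>\<omega>. \<alpha> * v \<theta> (X \<omega>) + (1 - \<alpha>) * v \<theta>' (X \<omega>) \<partial>Mp) + (\<integral>\<omega>. \<alpha> * (1 - \<alpha>) * (agg M f \<theta> (X \<omega>) - agg M f \<theta>' (X \<omega>))\<^sup>2 \<partial>Mp)"
      by (rule Bochner_Integration.integral_add) (use i1 in auto)
    also have "(\<integral>\<omega>. \<alpha> * v \<theta> (X \<omega>) + (1 - \<alpha>) * v \<theta>' (X \<omega>) \<partial>Mp) = (\<integral>\<omega>. \<alpha> * v \<theta> (X \<omega>) \<partial>Mp) + (\<integral>\<omega>. (1 - \<alpha>) * v \<theta>' (X \<omega>) \<partial>Mp)"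
      by (rule Bochner_Integration.integral_add) (use i1 in auto)
    finally show ?thesis by (simp add: VI[OF th(1)] VI[OF th(2)] D_def)
  qed
  have seg_G: "G (\<lambda>k. \<alpha> * \<theta> k + (1 - \<alpha>) * \<theta>' k) \<le> \<alpha> * G \<theta> + (1 - \<alpha>) * G \<theta>' - ((1 - \<nu>) * Cl / 2 - \<mu>) * (\<alpha> * (1 - \<alpha>) * D \<theta> \<theta>')"
    if th: "\<theta> \<in> wsimplex M" "\<theta>' \<in> wsimplex M" and al: "0 \<le> \<alpha>" "\<alpha> \<le> 1" for \<theta> \<theta>' \<alpha>
  proof -
    let ?ta = "\<lambda>k. \<alpha> * \<theta> k + (1 - \<alpha>) * \<theta>' k"
    have ta: "?ta \<in> wsimplex M" by (rule wsimplex_comb[OF th al])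
    define w where "w = \<alpha> * (1 - \<alpha>) * D \<theta> \<theta>'"
    have r: "(1 - \<nu>) * rk ?ta \<le> (1 - \<nu>) * (\<alpha> * rk \<theta> + (1 - \<alpha>) * rk \<theta>' - Cl / 2 * w)"
      using seg_rk[OF th al] nu unfolding w_def by (intro mult_left_mono) auto
    have "G ?ta = (1 - \<nu>) * rk ?ta + \<nu> * (\<alpha> * (\<Sum>j<M. \<theta> j * rj j) + (1 - \<alpha>) * (\<Sum>j<M. \<theta>' j * rj j)) + \<mu> * (\<alpha> * V \<theta> + (1 - \<alpha>) * V \<theta>' + w) + \<beta> / real n * (\<alpha> * Kdiv M \<pi> \<theta> + (1 - \<alpha>) * Kdiv M \<pi> \<theta>')"
      unfolding Gform[OF ta] segs segK seg_V[OF th al] w_def ..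
    also have "\<dots> \<le> (1 - \<nu>) * (\<alpha> * rk \<theta> + (1 - \<alpha>) * rk \<theta>' - Cl / 2 * w) + \<nu> * (\<alpha> * (\<Sum>j<M. \<theta> j * rj j) + (1 - \<alpha>) * (\<Sum>j<M. \<theta>' j * rj j)) + \<mu> * (\<alpha> * V \<theta> + (1 - \<alpha>) * V \<theta>' + w) + \<beta> / real n * (\<alpha> * Kdiv M \<pi> \<theta> + (1 - \<alpha>) * Kdiv M \<pi> \<theta>')"
      using r by linarith
    also have "\<dots> = \<alpha> * G \<theta> + (1 - \<alpha>) * G \<theta>' - ((1 - \<nu>) * Cl / 2 - \<mu>) * w"
      unfolding Gform[OF th(1)] Gform[OF th(2)] using n_pos by (simp add: field_simps)
    finally show ?thesis unfolding w_def .
  qed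
  have th_s: "\<theta>h \<in> wsimplex M" "\<theta>s \<in> wsimplex M" using thetah_min(1) thetas_min(1) by auto
  have c4: "4 * \<mu> \<le> (1 - \<nu>) * Cl / 2 - \<mu>"
  proof -
    have "10 * \<mu> \<le> (1 - \<nu>) * Cl" using mu_le Cl_pos by (smt (verit) min.cobounded1 mult_right_mono)
    then show ?thesis by linarith
  qed
  have gap: "4 * \<mu> * D \<theta>h \<theta>s \<le> G \<theta>h - G \<theta>s"
  proof (rule lim_arg)
    fix \<alpha> :: real assume a: "0 < \<alpha>" "\<alpha> \<le> 1"
    let ?c = "(1 - \<nu>) * Cl / 2 - \<mu>"
    have "G \<theta>s \<le> G (\<lambda>k. \<alpha> * \<theta>h k + (1 - \<alpha>) * \<theta>s k)"
      using thetas_min(2) wsimplex_comb[OF th_s] a unfolding G_def by auto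
    also have "\<dots> \<le> \<alpha> * G \<theta>h + (1 - \<alpha>) * G \<theta>s - ?c * (\<alpha> * (1 - \<alpha>) * D \<theta>h \<theta>s)"
      using seg_G[OF th_s] a by auto
    finally have h: "G \<theta>s \<le> \<alpha> * G \<theta>h + (1 - \<alpha>) * G \<theta>s - ?c * (\<alpha> * (1 - \<alpha>) * D \<theta>h \<theta>s)" .
    have eq: "\<alpha> * (?c * (1 - \<alpha>) * D \<theta>h \<theta>s) = ?c * (\<alpha> * (1 - \<alpha>) * D \<theta>h \<theta>s)" by (simp add: field_simps)
    have eq2: "\<alpha> * (G \<theta>h - G \<theta>s) = \<alpha> * G \<theta>h + (1 - \<alpha>) * G \<theta>s - G \<theta>s" by (simp add: algebra_simps)
    have "\<alpha> * (?c * (1 - \<alpha>) * D \<theta>h \<theta>s) \<le> \<alpha> * (G \<theta>h - G \<theta>s)"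
      using h eq eq2 by linarith
    then have "?c * (1 - \<alpha>) * D \<theta>h \<theta>s \<le> G \<theta>h - G \<theta>s" using a by simp
    moreover have "4 * \<mu> * (1 - \<alpha>) * D \<theta>h \<theta>s \<le> ?c * (1 - \<alpha>) * D \<theta>h \<theta>s"
      using c4 a Dnn[of \<theta>h \<theta>s] by (intro mult_right_mono) auto
    ultimately show "4 * \<mu> * (1 - \<alpha>) * D \<theta>h \<theta>s \<le> G \<theta>h - G \<theta>s" by linarith
  qed (use mu_pos Dnn in auto)
  have Qform: "Qcrit n xs ys M f lo \<nu> \<beta> \<pi> \<theta> = Emp n xs ys (tloss M f lo \<nu> \<theta>) + \<beta> / real n * Kdiv M \<pi> \<theta>" for \<theta>
  proof -
    have sw: "(\<Sum>i<n. \<Sum>j<M. \<theta> j * lo (ys i) (f j (xs i))) = (\<Sum>j<M. \<theta> j * (\<Sum>i<n. lo (ys i) (f j (xs i))))"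
      by (simp add: sum_distrib_left sum.swap[of _ "{..<n}"])
    have e1: "Emp n xs ys (tloss M f lo \<nu> \<theta>) = (1 - \<nu>) * emp_risk n xs ys lo (agg M f \<theta>) + \<nu> * (\<Sum>j<M. \<theta> j * emp_risk n xs ys lo (f j))"
      unfolding Emp_def tloss_def emp_risk_def
      by (simp add: sum.distrib sum_distrib_left[symmetric] sw) (simp add: sum_distrib_left algebra_simps add_divide_distrib sum_divide_distrib)
    have k: "Kdiv M \<pi> \<theta> = - (\<Sum>j<M. \<theta> j * ln (\<pi> j))"
      unfolding Kdiv_def sum_negf[symmetric] by (intro sum.cong refl) (simp add: ln_div prior_pos)
    show ?thesis unfolding Qcrit_def e1 k by simp
  qed
  have tI: "integrable Mp (\<lambda>\<omega>. tloss M f lo \<nu> \<theta> (Y \<omega>) (X \<omega>))" if th: "\<theta> \<in> wsimplex M" for \<theta>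
    unfolding tloss_def
    by (intro Bochner_Integration.integrable_add integrable_mult_right Bochner_Integration.integrable_sum) (auto intro: Lint[OF th] Ljint)
  have Pdiff: "Pop Mp X Y (\<lambda>y x. tloss M f lo \<nu> \<theta>h y x - tloss M f lo \<nu> \<theta>s y x) = Pop Mp X Y (tloss M f lo \<nu> \<theta>h) - Pop Mp X Y (tloss M f lo \<nu> \<theta>s)"
    unfolding Pop_def by (rule Bochner_Integration.integral_diff) (auto intro: tI th_s)
  have Ediff: "Emp n xs ys (\<lambda>y x. tloss M f lo \<nu> \<theta>h y x - tloss M f lo \<nu> \<theta>s y x) = Emp n xs ys (tloss M f lo \<nu> \<theta>h) - Emp n xs ys (tloss M f lo \<nu> \<theta>s)"
    unfolding Emp_def by (simp add: sum_subtractf right_diff_distrib)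
  have sumh: "(\<Sum>j<M. \<theta>h j) = 1" and sums: "(\<Sum>j<M. \<theta>s j) = 1" using th_s by (auto simp: wsimplex_def)
  have A_eq: "(\<Sum>j<M. \<theta>h j * sqnorm Mp X (\<lambda>x. f j x - agg M f \<theta>s x)) = V \<theta>h + D \<theta>h \<theta>s"
  proof -
    have pw: "(\<Sum>j<M. \<theta>h j * (f j x - agg M f \<theta>s x)\<^sup>2) = v \<theta>h x + (agg M f \<theta>h x - agg M f \<theta>s x)\<^sup>2" for x
    proof -
      have "(\<Sum>j<M. \<theta>h j * (f j x - agg M f \<theta>s x)\<^sup>2) = (\<Sum>j<M. \<theta>h j * (f j x)\<^sup>2) - 2 * agg M f \<theta>s x * agg M f \<theta>h x + (agg M f \<theta>s x)\<^sup>2"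
        using var_id[OF sumh, of "\<lambda>j. f j x" "agg M f \<theta>s x"] by (simp add: agg_def)
      then show ?thesis unfolding vx[OF th_s(1)] by (simp add: power2_eq_square algebra_simps)
    qed
    have "(\<Sum>j<M. \<theta>h j * sqnorm Mp X (\<lambda>x. f j x - agg M f \<theta>s x)) = (\<integral>\<omega>. (\<Sum>j<M. \<theta>h j * (f j (X \<omega>) - agg M f \<theta>s (X \<omega>))\<^sup>2) \<partial>Mp)"
      unfolding sqnorm_def by (subst Bochner_Integration.integral_sum) (auto intro!: integrable_mult_right intro: sq1 th_s)
    also have "\<dots> = (\<integral>\<omega>. v \<theta>h (X \<omega>) + (agg M f \<theta>h (X \<omega>) - agg M f \<theta>s (X \<omega>))\<^sup>2 \<partial>Mp)"
      unfolding pw ..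
    also have "\<dots> = V \<theta>h + D \<theta>h \<theta>s"
      unfolding VI[OF th_s(1)] D_def by (rule Bochner_Integration.integral_add) (auto intro: vint sq2 th_s)
    finally show ?thesis .
  qed
  have B_eq: "(\<Sum>j<M. \<Sum>k<M. \<theta>h j * Hmat Mp X f j k * \<theta>s k) = V \<theta>h + V \<theta>s + D \<theta>h \<theta>s"
  proof -
    have pw: "(\<Sum>j<M. \<Sum>k<M. \<theta>h j * (f j x - f k x)\<^sup>2 * \<theta>s k) = v \<theta>h x + v \<theta>s x + (agg M f \<theta>h x - agg M f \<theta>s x)\<^sup>2" for x
    proof -
      have inner: "(\<Sum>k<M. \<theta>h j * (f j x - f k x)\<^sup>2 * \<theta>s k) = \<theta>h j * ((\<Sum>k<M. \<theta>s k * (f k x)\<^sup>2) - 2 * f j x * agg M f \<theta>s x + (f j x)\<^sup>2)" for j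
      proof -
        have "(\<Sum>k<M. \<theta>h j * (f j x - f k x)\<^sup>2 * \<theta>s k) = \<theta>h j * (\<Sum>k<M. \<theta>s k * (f k x - f j x)\<^sup>2)"
          by (simp add: sum_distrib_left power2_commute algebra_simps)
        also have "\<dots> = \<theta>h j * ((\<Sum>k<M. \<theta>s k * (f k x)\<^sup>2) - 2 * f j x * agg M f \<theta>s x + (f j x)\<^sup>2)"
          using var_id[OF sums, of "\<lambda>k. f k x" "f j x"] by (simp add: agg_def)
        finally show ?thesis .
      qed
      define S where "S = (\<Sum>k<M. \<theta>s k * (f k x)\<^sup>2)"
      define ms where "ms = agg M f \<theta>s x"
      have "(\<Sum>j<M. \<Sum>k<M. \<theta>h j * (f j x - f k x)\<^sup>2 * \<theta>s k) = (\<Sum>j<M. \<theta>h j * (S - 2 * f j x * ms + (f j x)\<^sup>2))"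
        unfolding inner S_def ms_def ..
      also have "\<dots> = (\<Sum>j<M. \<theta>h j) * S - 2 * ms * (\<Sum>j<M. \<theta>h j * f j x) + (\<Sum>j<M. \<theta>h j * (f j x)\<^sup>2)"
        by (simp add: algebra_simps sum.distrib sum_subtractf sum_distrib_left sum_distrib_right)
      also have "\<dots> = v \<theta>h x + v \<theta>s x + (agg M f \<theta>h x - agg M f \<theta>s x)\<^sup>2"
        unfolding vx[OF th_s(1)] vx[OF th_s(2)] sumh S_def[symmetric] ms_def[symmetric] agg_def[of M f \<theta>h x, symmetric]
        by (simp add: power2_eq_square algebra_simps)
      finally show ?thesis .
    qed
    have ii: "integrable Mp (\<lambda>\<omega>. \<theta>h j * (f j (X \<omega>) - f k (X \<omega>))\<^sup>2 * \<theta>s k)" if "j < M" "k < M" for j k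
      by (intro integrable_mult_left integrable_mult_right) (use sq3[OF that] in auto)
    have "(\<Sum>j<M. \<Sum>k<M. \<theta>h j * Hmat Mp X f j k * \<theta>s k) = (\<Sum>j<M. \<Sum>k<M. (\<integral>\<omega>. \<theta>h j * (f j (X \<omega>) - f k (X \<omega>))\<^sup>2 * \<theta>s k \<partial>Mp))"
      unfolding Hmat_def sqnorm_def by simp
    also have "\<dots> = (\<Sum>j<M. (\<integral>\<omega>. (\<Sum>k<M. \<theta>h j * (f j (X \<omega>) - f k (X \<omega>))\<^sup>2 * \<theta>s k) \<partial>Mp))"
      by (intro sum.cong refl Bochner_Integration.integral_sum[symmetric] ii; simp)
    also have "\<dots> = (\<integral>\<omega>. (\<Sum>j<M. \<Sum>k<M. \<theta>h j * (f j (X \<omega>) - f k (X \<omega>))\<^sup>2 * \<theta>s k) \<partial>Mp)"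
      by (subst Bochner_Integration.integral_sum) (auto intro!: Bochner_Integration.integrable_sum intro: ii)
    also have "\<dots> = (\<integral>\<omega>. (v \<theta>h (X \<omega>) + v \<theta>s (X \<omega>)) + (agg M f \<theta>h (X \<omega>) - agg M f \<theta>s (X \<omega>))\<^sup>2 \<partial>Mp)"
      unfolding pw ..
    also have "\<dots> = (\<integral>\<omega>. v \<theta>h (X \<omega>) + v \<theta>s (X \<omega>) \<partial>Mp) + D \<theta>h \<theta>s"
      unfolding D_def by (rule Bochner_Integration.integral_add) (auto intro!: Bochner_Integration.integrable_add intro: vint sq2 th_s)
    also have "(\<integral>\<omega>. v \<theta>h (X \<omega>) + v \<theta>s (X \<omega>) \<partial>Mp) = V \<theta>h + V \<theta>s"
      unfolding VI[OF th_s(1)] VI[OF th_s(2)] by (rule Bochner_Integration.integral_add) (auto intro: vint th_s)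
    finally show ?thesis .
  qed
  have esum: "(\<Sum>k<M. e j k * r k) = r j" if "j < M" for j and r :: "nat \<Rightarrow> real"
  proof -
    have "(\<Sum>k<M. e j k * r k) = (\<Sum>k<M. if k = j then r k else 0)" by (intro sum.cong) (auto simp: e_def)
    then show ?thesis using that by simp
  qed
  have Ge: "G (e j) = rj j + \<beta> / real n * ln (1 / \<pi> j)" if j: "j < M" for j
  proof -
    have "V (e j) = 0" unfolding V_def Vvar_def agg_ej[OF j] esum[OF j] sqnorm_def by simp
    moreover have "rk (e j) = rj j" unfolding rk_def rj_def agg_ej[OF j] ..
    ultimately show ?thesis unfolding Gform[OF e_s[OF j]] esum[OF j] Kdiv_def by (simp add: algebra_simps)
  qed
  obtain j where j: "j < M" and jmin: "Min ((\<lambda>j. risk Mp X Y lo (f j) + (\<beta> / real n) * ln (1 / \<pi> j)) ` {..<M}) = rj j + \<beta> / real n * ln (1 / \<pi> j)"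
  proof -
    have "Min ((\<lambda>j. risk Mp X Y lo (f j) + (\<beta> / real n) * ln (1 / \<pi> j)) ` {..<M}) \<in> (\<lambda>j. risk Mp X Y lo (f j) + (\<beta> / real n) * ln (1 / \<pi> j)) ` {..<M}"
      using M_pos by (intro Min_in) (auto simp: lessThan_empty_iff)
    then show ?thesis using that unfolding rj_def by auto
  qed
  define Rh where "Rh = rk \<theta>h"
  define Sh where "Sh = (\<Sum>j<M. \<theta>h j * rj j)"
  define Ss where "Ss = (\<Sum>j<M. \<theta>s j * rj j)"
  define Th where "Th = Pop Mp X Y (tloss M f lo \<nu> \<theta>h)"
  define Ts where "Ts = Pop Mp X Y (tloss M f lo \<nu> \<theta>s)"
  define Eh where "Eh = Emp n xs ys (tloss M f lo \<nu> \<theta>h)"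
  define Es where "Es = Emp n xs ys (tloss M f lo \<nu> \<theta>s)"
  define Kh where "Kh = Kdiv M \<pi> \<theta>h"
  define Ks where "Ks = Kdiv M \<pi> \<theta>s"
  define Vh where "Vh = V \<theta>h"
  define Vs where "Vs = V \<theta>s"
  define Dd where "Dd = D \<theta>h \<theta>s"
  define Z where "Z = Zn Mp X Y n xs ys M f lo \<nu> \<mu> s \<pi> \<theta>h \<theta>s"
  define q where "q = \<beta> / real n"
  have Zeq: "Z = Th - Ts - Eh + Es - 2 * (\<mu> * Vh) - \<mu> * Vs - 2 * (\<mu> * Dd) - (1 / s) * Kh"
    unfolding Z_def Zn_def Let_def Pdiff Ediff A_eq B_eq
    by (simp add: Th_def Ts_def Eh_def Es_def Vh_def Vs_def Dd_def Kh_def algebra_simps)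
  have Th_eq: "Th = (1 - \<nu>) * Rh + \<nu> * Sh" unfolding Th_def Rh_def Sh_def by (rule PT[OF th_s(1)])
  have Gh: "G \<theta>h = Th + \<mu> * Vh + q * Kh" unfolding G_def Pcrit_def Th_def Vh_def V_def q_def Kh_def ..
  have Gs: "G \<theta>s = Ts + \<mu> * Vs + q * Ks" unfolding G_def Pcrit_def Ts_def Vs_def V_def q_def Ks_def ..
  have Qm: "Eh + q * Kh \<le> Es + q * Ks"
    using thetah_min(2)[OF th_s(2)] unfolding Qform Eh_def Es_def q_def Kh_def Ks_def .
  have J: "Rh \<le> Sh - Cl / 2 * Vh" using jens[OF th_s(1)] unfolding Rh_def Sh_def Vh_def .
  have gap': "4 * (\<mu> * Dd) \<le> G \<theta>h - G \<theta>s" using gap unfolding Dd_def by simp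
  have Gsj: "G \<theta>s \<le> rj j + q * ln (1 / \<pi> j)"
    using thetas_min(2)[OF e_s[OF j]] Ge[OF j] unfolding G_def q_def by simp
  have Vh0: "Vh \<ge> 0" unfolding Vh_def by (rule Vnn[OF th_s(1)])
  have Kh0: "Kh \<ge> 0"
    unfolding Kh_def Kdiv_def
  proof (intro sum_nonneg mult_nonneg_nonneg)
    fix i assume i: "i \<in> {..<M}"
    show "0 \<le> \<theta>h i" using th_s(1) i by (auto simp: wsimplex_def)
    have "\<pi> i \<le> (\<Sum>j<M. \<pi> j)" using i prior_pos by (intro member_le_sum) (auto intro: less_imp_le)
    then have "\<pi> i \<le> 1" using prior_sum by simp
    then show "0 \<le> ln (1 / \<pi> i)" using prior_pos[of i] i by simp
  qed
  have p1: "\<nu> * (Sh - Rh) \<ge> \<nu> * (Cl / 2 * Vh)" using J nu by (intro mult_left_mono) auto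
  have p2: "\<nu> * (Cl / 2 * Vh) \<ge> 5 * (\<mu> * Vh)"
  proof -
    have "10 * \<mu> \<le> \<nu> * Cl" using mu_le Cl_pos by (smt (verit) min.cobounded2 mult_right_mono)
    then have "10 * \<mu> * Vh \<le> \<nu> * Cl * Vh" using Vh0 by (intro mult_right_mono) auto
    then show ?thesis by (simp add: algebra_simps)
  qed
  have p3: "q * Kh \<ge> 3 * ((1 / s) * Kh)"
  proof -
    have "3 / s \<le> q" using beta_ge n_pos s_pos unfolding q_def by (simp add: field_simps)
    then have "3 / s * Kh \<le> q * Kh" using Kh0 by (intro mult_right_mono) auto
    then show ?thesis by simp
  qed
  have p4: "(1 / s) * Kh \<ge> 0" using Kh0 s_pos by simp
  have e1: "\<nu> * (Sh - Rh) = \<nu> * Sh - \<nu> * Rh" by (simp add: algebra_simps)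
  have e2: "(1 - \<nu>) * Rh = Rh - \<nu> * Rh" by (simp add: algebra_simps)
  have "Rh \<le> rj j + q * ln (1 / \<pi> j) + 2 * Z"
    using Zeq Th_eq Gh Gs Qm gap' Gsj p1 p2 p3 p4 e1 e2 by linarith
  then show ?thesis unfolding jmin Rh_def rk_def Z_def q_def .
qed

end
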